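(* Let $X\subseteq A^{\mathbb{N}}$ be a (one-sided) sofic shift over a finite alphabet $A$. Then the winning shift $W(X)\subseteq\{0,\dots,|A|-1\}^{\mathbb{N}}$ is weakly $1$-codable; if moreover $X$ is countable, then $W(X)$ is $1$-codable.
   Context: A sofic shift is the set of labels of right-infinite paths in a finite edge-labeled graph. Winning shift: for $X\subseteq A^{\mathbb{N}}$ and a choice sequence $\alpha=\alpha_0\alpha_1\cdots\in\{0,\dots,|A|-1\}^{\mathbb{N}}$, Alice and Bob play infinitely many rounds; in round $j$ Alice chooses $A_j\subseteq A$ with $|A_j|=\alpha_j+1$ and Bob chooses $a_j\in A_j$; Alice wins if $a_0a_1\cdots\in X$. $W(X)$ is the set of $\alpha$ for which Alice has a winning strategy. The ANS with language $0^*$ and radix order has $\mathrm{rep}(n)=0^n$; tuples are represented by left-padding with a new symbol $\#$; $Y\subseteq\mathbb{N}^d$ is $1$-recognizable if $\mathrm{rep}(Y)$ is regular. For $\mathbf{y}\in\mathbb{N}^{\mathbb{N}}$: $\sum\mathbf{y}=\sum_iy_i$; if finite, $\nu(\mathbf{y})$ is the unique nondecreasing tuple $(n_1,\dots,n_d)$ with $y_j=|\{k:n_k=j\}|$. The coding dimension of $Y\subseteq\mathbb{N}^{\mathbb{N}}$ is the least $d$ bounding $\sum\mathbf{y}$ on $Y$, if it exists. $Y$ is weakly $1$-codable if for each $k$ the set $\{\nu(\mathbf{y}):\mathbf{y}\in Y,\sum\mathbf{y}\le k\}$ is $1$-recognizable in each dimension, and $1$-codable if moreover its coding dimension is finite (here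 $W(X)$ is viewed with zero symbol $0$). *)

theory Defs
  imports Main "HOL-Library.Countable_Set"
begin

definition sofic :: "(nat \<Rightarrow> 'a) set \<Rightarrow> bool" where
  "sofic X \<longleftrightarrow> (\<exists>E :: (nat \<times> 'a \<times> nat) set. finite E \<and>
      X = {x. \<exists>p :: nat \<Rightarrow> nat. \<forall>i. (p i, x i, p (Suc i)) \<in> E})"

text \<open>A strategy of Alice maps the history of Bob's previous choices
a_0 ... a_(j-1) to the set A_j.\<close>

definition alice_wins :: "(nat \<Rightarrow> 'a::finite) set \<Rightarrow> (nat \<Rightarrow> nat) \<Rightarrow> bool" where
  "alice_wins X \<alpha> \<longleftrightarrow> (\<exists>\<sigma> :: 'a list \<Rightarrow> 'a set.
      (\<forall>w. card (\<sigma> w) = \<alpha> (length w) + 1) \<and>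
      (\<forall>a :: nat \<Rightarrow> 'a. (\<forall>j. a j \<in> \<sigma> (map a [0..<j])) \<longrightarrow> a \<in> X))"

definition winning_shift :: "(nat \<Rightarrow> 'a::finite) set \<Rightarrow> (nat \<Rightarrow> nat) set" where
  "winning_shift X = {\<alpha>. (\<forall>j. \<alpha> j < card (UNIV :: 'a set)) \<and> alice_wins X \<alpha>}"

definition regular_lang :: "'b list set \<Rightarrow> bool" where
  "regular_lang L \<longleftrightarrow> (\<exists>(Q :: nat set) q0 (\<delta> :: nat \<Rightarrow> 'b \<Rightarrow> nat) F.
      finite Q \<and> q0 \<in> Q \<and> (\<forall>q\<in>Q. \<forall>b. \<delta> q b \<in> Q) \<and> F \<subseteq> Q \<and>
      L = {w. foldl \<delta> q0 w \<in> F})"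

text \<open>Representation of a d-tuple of naturals in the ANS with language 0^*:
rep(n) = 0^n, components left-padded with the new symbol # to the common
length max n_i. A letter is a column, a list of length d of symbols, where
True encodes the symbol 0 and False encodes #.\<close>

definition rep_tuple :: "nat list \<Rightarrow> bool list list" where
  "rep_tuple t = (let m = foldr max t 0 in
      map (\<lambda>i. map (\<lambda>n. m - n \<le> i) t) [0..<m])"

definition one_recognizable :: "nat \<Rightarrow> nat list set \<Rightarrow> bool" where
  "one_recognizable d Y \<longleftrightarrow> Y \<subseteq> {t. length t = d} \<and> regular_lang (rep_tuple ` Y)"

text \<open>Sum of y is at most k (covers the case of an infinite sum).\<close>

definition seq_sum_le :: "(nat \<Rightarrow> nat) \<Rightarrow> nat \<Rightarrow> bool" where
  "seq_sum_le y k \<longleftrightarrow> (\<forall>N. (\<Sum>j<N. y j) \<le> k)"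

definition nu :: "(nat \<Rightarrow> nat) \<Rightarrow> nat list" where
  "nu y = (THE t. sorted t \<and> (\<forall>j. count_list t j = y j))"

definition nu_set :: "(nat \<Rightarrow> nat) set \<Rightarrow> nat \<Rightarrow> nat list set" where
  "nu_set Y k = {nu y | y. y \<in> Y \<and> seq_sum_le y k}"

definition weakly_1_codable :: "(nat \<Rightarrow> nat) set \<Rightarrow> bool" where
  "weakly_1_codable Y \<longleftrightarrow>
     (\<forall>k d. one_recognizable d {t \<in> nu_set Y k. length t = d})"

definition has_finite_coding_dim :: "(nat \<Rightarrow> nat) set \<Rightarrow> bool" where
  "has_finite_coding_dim Y \<longleftrightarrow> (\<exists>d. \<forall>y\<in>Y. seq_sum_le y d)"

definition one_codable :: "(nat \<Rightarrow> nat) set \<Rightarrow> bool" where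
  "one_codable Y \<longleftrightarrow> weakly_1_codable Y \<and> has_finite_coding_dim Y"

end

theory Submission
  imports Defs "HOL-Library.Multiset"
begin


lemma sorted_count_unique:
  assumes "sorted t" "sorted t'" "\<And>j. count_list t j = count_list t' j"
  shows "t = t'"
proof -
  have "mset t = mset t'" using assms(3) by (simp add: multiset_eq_iff count_mset)
  then have "sort t' = t" using properties_for_sort[of t t'] assms(1) by simp
  moreover have "sort t' = t'" using assms(2) by (simp add: sorted_sort_id)
  ultimately show ?thesis by simp
qed

lemma nu_count: "sorted t \<Longrightarrow> nu (count_list t) = t"
  unfolding nu_def
  by (rule the_equality) (auto intro: sorted_count_unique)

lemma sum_count_list: "(\<Sum>j<N. count_list t j) = length (filter (\<lambda>x. x < N) (t::nat list))"
proof (induction t)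
  case Nil then show ?case by simp
next
  case (Cons a t)
  have e: "\<And>j. count_list (a#t) j = (if a = j then 1 else 0) + count_list t j" by simp
  have "(\<Sum>j<N. count_list (a#t) j) = (\<Sum>j<N. (if a = j then 1 else 0)) + (\<Sum>j<N. count_list t j)"
    unfolding e by (rule sum.distrib)
  also have "(\<Sum>j<N. (if a = j then 1 else 0::nat)) = (if a < N then 1 else 0)"
    by (induction N) auto
  finally show ?case using Cons by simp
qed

lemma seq_sum_le_count: "seq_sum_le (count_list t) k \<longleftrightarrow> length t \<le> k"
proof
  assume "seq_sum_le (count_list t) k"
  then have "(\<Sum>j<Suc (sum_list t). count_list t j) \<le> k" unfolding seq_sum_le_def by blast
  moreover have "filter (\<lambda>x. x < Suc (sum_list t)) t = t"
    by (auto simp: filter_id_conv less_Suc_eq_le member_le_sum_list)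
  ultimately show "length t \<le> k" by (metis sum_count_list)
next
  assume "length t \<le> k"
  then show "seq_sum_le (count_list t) k" unfolding seq_sum_le_def
    by (metis sum_count_list length_filter_le order_trans)
qed

lemma count_list_replicate': "count_list (replicate n x) y = (if x = y then n else 0)"
  by (induction n) auto

lemma exists_sorted_count:
  assumes "seq_sum_le y k"
  shows "\<exists>t. sorted t \<and> count_list t = y"
proof -
  have fin: "finite {j. 0 < y j}"
  proof (rule ccontr)
    assume "infinite {j. 0 < y j}"
    then obtain B where B: "B \<subseteq> {j. 0 < y j}" "finite B" "card B = Suc k"
      using infinite_arbitrarily_large by blast
    obtain N where N: "\<forall>j\<in>B. j < N"
      using B(2) finite_nat_iff_bounded by auto
    have "card B = (\<Sum>j\<in>B. 1::nat)" by simp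
    also have "\<dots> \<le> (\<Sum>j\<in>B. y j)" using B(1) by (intro sum_mono) auto
    also have "\<dots> \<le> (\<Sum>j<N. y j)" using N by (intro sum_mono2) auto
    also have "\<dots> \<le> k" using assms unfolding seq_sum_le_def by blast
    finally show False using B(3) by simp
  qed
  then obtain N where N: "\<forall>j\<in>{j. 0 < y j}. j < N" using finite_nat_iff_bounded by auto
  define l where "l n = concat (map (\<lambda>j. replicate (y j) j) [0..<n])" for n
  have cl: "count_list (l n) j = (if j < n then y j else 0)" for n j
    by (induction n) (auto simp: l_def count_list_replicate')
  have "count_list (sort (l N)) = y"
  proof
    fix j
    have "count_list (sort (l N)) j = count_list (l N) j"
      by (metis count_mset mset_sort)
    also have "\<dots> = y j" using cl N by (cases "j < N") force+
    finally show "count_list (sort (l N)) j = y j" .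
  qed
  then show ?thesis by (intro exI[of _ "sort (l N)"]) simp
qed

lemma nu_set_char:
  "{t \<in> nu_set Y k. length t = d} = {t. sorted t \<and> length t = d \<and> d \<le> k \<and> count_list t \<in> Y}"
proof (intro set_eqI iffI)
  fix t assume "t \<in> {t \<in> nu_set Y k. length t = d}"
  then obtain y where y: "t = nu y" "y \<in> Y" "seq_sum_le y k" "length t = d"
    unfolding nu_set_def by blast
  obtain t' where t': "sorted t'" "count_list t' = y" using exists_sorted_count[OF y(3)] by blast
  have "t = t'" using y(1) t' nu_count by blast
  have "length t \<le> k" using seq_sum_le_count[of t k] y(3) t' \<open>t = t'\<close> by simp
  then show "t \<in> {t. sorted t \<and> length t = d \<and> d \<le> k \<and> count_list t \<in> Y}"
    using t' y \<open>t = t'\<close> by auto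
next
  fix t assume "t \<in> {t. sorted t \<and> length t = d \<and> d \<le> k \<and> count_list t \<in> Y}"
  then have h: "sorted t" "length t = d" "d \<le> k" "count_list t \<in> Y" by auto
  have "nu (count_list t) = t" using h(1) by (rule nu_count)
  moreover have "seq_sum_le (count_list t) k" using h seq_sum_le_count by simp
  ultimately have "t \<in> nu_set Y k" unfolding nu_set_def using h(4)
    by (intro CollectI exI[of _ "count_list t"]) simp
  then show "t \<in> {t \<in> nu_set Y k. length t = d}" using h(2) by simp
qed

lemma regular_fold:
  fixes \<delta> :: "'s \<Rightarrow> 'b \<Rightarrow> 's"
  assumes "finite Q" "q0 \<in> Q" "\<And>q b. q \<in> Q \<Longrightarrow> \<delta> q b \<in> Q"
  shows "regular_lang {w. P (foldl \<delta> q0 w)}"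
proof -
  obtain f :: "'s \<Rightarrow> nat" and n where f: "f ` Q = {i. i < n}" "inj_on f Q"
    using finite_imp_inj_to_nat_seg[OF assms(1)] by blast
  define \<delta>' where "\<delta>' i b = f (\<delta> (inv_into Q f i) b)" for i b
  have fold_in: "foldl \<delta> q w \<in> Q" if "q \<in> Q" for q w
    using that by (induction w arbitrary: q) (auto simp: assms(3))
  have fold': "foldl \<delta>' (f q) w = f (foldl \<delta> q w)" if "q \<in> Q" for q w
    using that
  proof (induction w arbitrary: q)
    case Nil then show ?case by simp
  next
    case (Cons b w)
    have "\<delta>' (f q) b = f (\<delta> q b)" using Cons.prems f(2) by (simp add: \<delta>'_def)
    then show ?case using Cons assms(3) by simp
  qed
  show ?thesis unfolding regular_lang_def
  proof (intro exI conjI)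
    show "finite (f ` Q)" using assms(1) by simp
    show "f q0 \<in> f ` Q" using assms(2) by simp
    show "\<forall>q\<in>f ` Q. \<forall>b. \<delta>' q b \<in> f ` Q"
      using assms(3) by (auto simp: \<delta>'_def inv_into_into)
    show "f ` {q\<in>Q. P q} \<subseteq> f ` Q" by blast
    show "{w. P (foldl \<delta> q0 w)} = {w. foldl \<delta>' (f q0) w \<in> f ` {q\<in>Q. P q}}"
    proof (intro set_eqI iffI; simp)
      fix w assume "P (foldl \<delta> q0 w)"
      then show "foldl \<delta>' (f q0) w \<in> f ` {q\<in>Q. P q}"
        using fold'[OF assms(2)] fold_in[OF assms(2)] by auto
    next
      fix w assume "foldl \<delta>' (f q0) w \<in> f ` {q\<in>Q. P q}"
      then obtain q where "q \<in> Q" "P q" "f (foldl \<delta> q0 w) = f q"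
        using fold'[OF assms(2)] by auto
      then show "P (foldl \<delta> q0 w)" using f(2) fold_in[OF assms(2)]
        by (metis inj_on_def)
    qed
  qed
qed

lemma regular_empty: "regular_lang {}"
  unfolding regular_lang_def
  by (rule exI[of _ "{0}"], rule exI[of _ 0], rule exI[of _ "\<lambda>_ _. 0"], rule exI[of _ "{}"]) auto

lemma pow_infinite_uncountable:
  assumes "infinite (P :: 'b set)"
  shows "\<not> countable (Pow P)"
proof
  assume c: "countable (Pow P)"
  have "Pow P \<noteq> {}" by blast
  then obtain f :: "nat \<Rightarrow> 'b set" where f: "range f = Pow P"
    using range_from_nat_into[OF _ c] by blast
  obtain g :: "nat \<Rightarrow> 'b" where g: "inj g" "range g \<subseteq> P"
    using infinite_countable_subset[OF assms] by blast
  define D where "D = {g n | n. g n \<notin> f n}"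
  have "D \<in> Pow P" using g(2) by (auto simp: D_def)
  then obtain n where "f n = D" using f by (metis imageE)
  then show False using g(1) unfolding D_def by (auto dest: injD)
qed



lemma pigeon:
  fixes V :: "'b set" and P :: "'b \<Rightarrow> nat \<Rightarrow> bool"
  assumes "finite V" "\<forall>k. \<exists>q\<in>V. P q k" "\<And>q k k'. P q k \<Longrightarrow> k' \<le> k \<Longrightarrow> P q k'"
  shows "\<exists>q\<in>V. \<forall>k. P q k"
proof (rule ccontr)
  assume "\<not> (\<exists>q\<in>V. \<forall>k. P q k)"
  then have "\<forall>q\<in>V. \<exists>k. \<not> P q k" by blast
  then obtain K :: "'b \<Rightarrow> nat" where K: "\<forall>q\<in>V. \<not> P q (K q)" by metis
  define M where "M = Max (K ` V)"
  obtain q where q: "q \<in> V" "P q M" using assms(2) by blast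
  have "K q \<le> M" unfolding M_def using assms(1) q(1) by simp
  then show False using assms(3)[OF q(2)] K q(1) by blast
qed

primrec pre :: "(nat \<Rightarrow> 'a list \<Rightarrow> 'a) \<Rightarrow> nat \<Rightarrow> 'a list" where
  "pre ch 0 = []"
| "pre ch (Suc n) = pre ch n @ [ch n (pre ch n)]"

definition play :: "(nat \<Rightarrow> 'a list \<Rightarrow> 'a) \<Rightarrow> nat \<Rightarrow> 'a" where
  "play ch n = ch n (pre ch n)"

lemma pre_map: "map (play ch) [0..<n] = pre ch n"
  by (induction n) (simp_all add: play_def)

locale sg =
  fixes E :: "(nat \<times> 'a::finite \<times> nat) set"
  assumes finE: "finite E"
begin

definition Xs where "Xs = {x. \<exists>p::nat\<Rightarrow>nat. \<forall>i. (p i, x i, p (Suc i)) \<in> E}"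
definition alive where "alive q \<longleftrightarrow> (\<exists>(p::nat\<Rightarrow>nat) x. p 0 = q \<and> (\<forall>i. (p i, x i, p (Suc i)) \<in> E))"
definition S0 where "S0 = {q. alive q}"
definition Sset :: "'a list \<Rightarrow> nat set" where
  "Sset w = {q. alive q \<and> (\<exists>p::nat\<Rightarrow>nat. p (length w) = q \<and> (\<forall>i<length w. (p i, w!i, p (Suc i)) \<in> E))}"
definition dl :: "nat set \<Rightarrow> 'a \<Rightarrow> nat set" where
  "dl S a = {q'. alive q' \<and> (\<exists>q\<in>S. (q,a,q') \<in> E)}"
definition N0 :: "nat set set" where "N0 = {S. S \<subseteq> S0 \<and> S \<noteq> {}}"
definition Fw :: "nat \<Rightarrow> nat set set \<Rightarrow> nat set set" where
  "Fw n W = {S. S \<subseteq> S0 \<and> S \<noteq> {} \<and> n + 1 \<le> card {a. dl S a \<in> W}}"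
fun Wb :: "(nat \<Rightarrow> nat) \<Rightarrow> nat \<Rightarrow> nat \<Rightarrow> nat set set" where
  "Wb \<alpha> m 0 = N0"
| "Wb \<alpha> m (Suc j) = Fw (\<alpha> (m - j)) (Wb \<alpha> m j)"

lemma finite_S0: "finite S0"
proof -
  have "S0 \<subseteq> fst ` E"
  proof
    fix q assume "q \<in> S0"
    then obtain p x where "p 0 = q" "\<forall>i. (p i, x i, p (Suc i)) \<in> E"
      unfolding S0_def alive_def by blast
    then have "(q, x 0, p (Suc 0)) \<in> E" by metis
    then show "q \<in> fst ` E" by (metis fst_conv image_eqI)
  qed
  then show ?thesis using finE finite_subset by blast
qed

lemma alive_pred:
  assumes "alive q'" "(q,a,q') \<in> E" shows "alive q"
proof -
  obtain p x where p: "p 0 = q'" "\<forall>i. (p i, x i, p (Suc i)) \<in> E"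
    using assms(1) unfolding alive_def by blast
  define p' where "p' i = (if i = 0 then q else p (i - 1))" for i
  define x' where "x' i = (if i = 0 then a else x (i - 1))" for i
  have "\<forall>i. (p' i, x' i, p' (Suc i)) \<in> E"
  proof
    fix i show "(p' i, x' i, p' (Suc i)) \<in> E"
      using p assms(2) by (cases i) (auto simp: p'_def x'_def)
  qed
  then show ?thesis unfolding alive_def by (intro exI[of _ p'] exI[of _ x']) (simp add: p'_def)
qed

lemma alive_succ:
  assumes "alive q" shows "\<exists>a q'. (q,a,q') \<in> E \<and> alive q'"
proof -
  obtain p x where p: "p 0 = q" "\<forall>i. (p i, x i, p (Suc i)) \<in> E"
    using assms unfolding alive_def by blast
  have "alive (p (Suc 0))" unfolding alive_def
    using p(2) by (intro exI[of _ "\<lambda>i. p (Suc i)"] exI[of _ "\<lambda>i. x (Suc i)"]) simp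
  then show ?thesis using p by metis
qed

lemma Sset_Nil: "Sset [] = S0"
  unfolding Sset_def S0_def by auto

lemma Sset_snoc: "Sset (w @ [a]) = dl (Sset w) a"
proof (intro set_eqI iffI)
  fix q' assume "q' \<in> Sset (w @ [a])"
  then obtain p where p: "alive q'" "p (Suc (length w)) = q'"
    "\<forall>i<Suc (length w). (p i, (w@[a])!i, p (Suc i)) \<in> E"
    unfolding Sset_def by auto
  have e: "(p (length w), a, q') \<in> E" using p(2,3) by (metis lessI nth_append_length)
  have "alive (p (length w))" using alive_pred[OF p(1) e] .
  moreover have "\<forall>i<length w. (p i, w!i, p (Suc i)) \<in> E"
    using p(3) by (metis less_SucI nth_append)
  ultimately have "p (length w) \<in> Sset w" unfolding Sset_def by blast
  then show "q' \<in> dl (Sset w) a" unfolding dl_def using p(1) e by blast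
next
  fix q' assume "q' \<in> dl (Sset w) a"
  then obtain q where q: "alive q'" "q \<in> Sset w" "(q,a,q') \<in> E" unfolding dl_def by blast
  then obtain p where p: "p (length w) = q" "\<forall>i<length w. (p i, w!i, p (Suc i)) \<in> E"
    unfolding Sset_def by blast
  define p' where "p' = p(Suc (length w) := q')"
  have "\<forall>i<Suc (length w). (p' i, (w@[a])!i, p' (Suc i)) \<in> E"
  proof (intro allI impI)
    fix i assume "i < Suc (length w)"
    then consider "i < length w" | "i = length w" by linarith
    then show "(p' i, (w@[a])!i, p' (Suc i)) \<in> E"
    proof cases
      case 1 then show ?thesis using p(2) by (simp add: p'_def nth_append)
    next
      case 2 then show ?thesis using p(1) q(3) by (simp add: p'_def)
    qed
  qed
  then show "q' \<in> Sset (w @ [a])" unfolding Sset_def using q(1)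
    by (intro CollectI conjI exI[of _ p']) (auto simp: p'_def)
qed

lemma Sset_sub: "Sset w \<subseteq> S0" unfolding Sset_def S0_def by blast
lemma dl_sub: "dl S a \<subseteq> S0" unfolding dl_def S0_def by blast
lemma dl_empty: "dl {} a = {}" unfolding dl_def by blast
lemma Fw_sub: "Fw n W \<subseteq> Pow S0" unfolding Fw_def by blast
lemma Fw_ne: "S \<in> Fw n W \<Longrightarrow> S \<noteq> {}" unfolding Fw_def by blast
lemma Wb_sub: "Wb \<alpha> m j \<subseteq> Pow S0" by (cases j) (auto simp: N0_def Fw_def)
lemma Wb_ne: "S \<in> Wb \<alpha> m j \<Longrightarrow> S \<noteq> {}" by (cases j) (auto simp: N0_def Fw_def)

lemma F0N: "Fw 0 N0 = N0"
proof (intro set_eqI iffI)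
  fix S assume "S \<in> Fw 0 N0" then show "S \<in> N0" unfolding Fw_def N0_def by blast
next
  fix S assume S: "S \<in> N0"
  then obtain q where q: "q \<in> S" "alive q" unfolding N0_def S0_def by blast
  then obtain a q' where aq: "(q,a,q') \<in> E" "alive q'" using alive_succ by blast
  then have "q' \<in> dl S a" using q unfolding dl_def by blast
  then have "dl S a \<in> N0" using dl_sub unfolding N0_def by blast
  then have "{a. dl S a \<in> N0} \<noteq> {}" by blast
  then have "1 \<le> card {a. dl S a \<in> N0}" by (simp add: Suc_le_eq card_gt_0_iff)
  then show "S \<in> Fw 0 N0" using S unfolding Fw_def N0_def by simp
qed

lemma Xs_Sset: "x \<in> Xs \<Longrightarrow> Sset (map x [0..<n]) \<noteq> {}"
proof -
  assume "x \<in> Xs"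
  then obtain p where p: "\<forall>i. (p i, x i, p (Suc i)) \<in> E" unfolding Xs_def by blast
  have "alive (p n)" unfolding alive_def
    using p by (intro exI[of _ "\<lambda>i. p (n + i)"] exI[of _ "\<lambda>i. x (n + i)"]) simp
  then have "p n \<in> Sset (map x [0..<n])" unfolding Sset_def using p by auto
  then show ?thesis by blast
qed

definition readp :: "(nat \<Rightarrow> 'a) \<Rightarrow> nat \<Rightarrow> nat \<Rightarrow> nat \<Rightarrow> bool" where
  "readp x q n k \<longleftrightarrow> (\<exists>p::nat\<Rightarrow>nat. p 0 = q \<and> (\<forall>i<k. (p i, x (n+i), p (Suc i)) \<in> E))"

lemma readp_mono: "readp x q n k \<Longrightarrow> k' \<le> k \<Longrightarrow> readp x q n k'"
  unfolding readp_def by fastforce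

lemma readp_step:
  assumes "\<forall>k. readp x q n k"
  shows "\<exists>q'. (q, x n, q') \<in> E \<and> (\<forall>k. readp x q' (Suc n) k)"
proof -
  have "\<exists>q'\<in>snd ` snd ` E. (q, x n, q') \<in> E \<and> readp x q' (Suc n) k" for k
  proof -
    obtain p where p: "p 0 = q" "\<forall>i<Suc k. (p i, x (n+i), p (Suc i)) \<in> E"
      using assms unfolding readp_def by blast
    have e: "(q, x n, p (Suc 0)) \<in> E" using p by (metis add_0_right zero_less_Suc)
    have "readp x (p (Suc 0)) (Suc n) k" unfolding readp_def
      using p(2) by (intro exI[of _ "\<lambda>i. p (Suc i)"]) auto
    moreover have "p (Suc 0) \<in> snd ` snd ` E" using e by force
    ultimately show ?thesis using e by blast
  qed
  then have "\<exists>q'\<in>snd ` snd ` E. \<forall>k. (q, x n, q') \<in> E \<and> readp x q' (Suc n) k"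
    using pigeon[of "snd ` snd ` E" "\<lambda>q' k. (q, x n, q') \<in> E \<and> readp x q' (Suc n) k"]
      finE readp_mono by blast
  then show ?thesis by blast
qed

lemma konig:
  assumes "\<forall>n. Sset (map x [0..<n]) \<noteq> {}"
  shows "x \<in> Xs"
proof -
  have "\<exists>q\<in>fst ` E. readp x q 0 (Suc k)" for k
  proof -
    obtain q' where "q' \<in> Sset (map x [0..<Suc k])" using assms by blast
    then obtain p where p: "\<forall>i<Suc k. (p i, (map x [0..<Suc k])!i, p (Suc i)) \<in> E"
      unfolding Sset_def by auto
    then have p': "\<forall>i<Suc k. (p i, x (0+i), p (Suc i)) \<in> E" by (simp del: upt_Suc)
    then have "(p 0, x 0, p (Suc 0)) \<in> E" by auto
    then have "p 0 \<in> fst ` E" by force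
    then show ?thesis using p' unfolding readp_def by blast
  qed
  then obtain q0 where "\<forall>k. readp x q0 0 (Suc k)"
    using pigeon[of "fst ` E" "\<lambda>q k. readp x q 0 (Suc k)"] finE readp_mono by force
  then have q0: "\<forall>k. readp x q0 0 k" using readp_mono by (meson le_SucI order_refl)
  define nxt where "nxt i q = (SOME q'. (q, x i, q') \<in> E \<and> (\<forall>k. readp x q' (Suc i) k))" for i q
  define pth where "pth = rec_nat q0 nxt"
  have ps: "pth 0 = q0" "pth (Suc i) = nxt i (pth i)" for i by (simp_all add: pth_def)
  have inv: "\<forall>k. readp x (pth i) i k" for i
  proof (induction i)
    case 0 then show ?case using q0 ps by simp
  next
    case (Suc i)
    then show ?case using someI_ex[OF readp_step[OF Suc]] ps(2) nxt_def by simp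
  qed
  have "(pth i, x i, pth (Suc i)) \<in> E" for i
    using someI_ex[OF readp_step[OF inv[of i]]] ps(2) nxt_def by simp
  then show ?thesis unfolding Xs_def by blast
qed

lemma win_Wb:
  assumes "alice_wins Xs \<alpha>"
  shows "S0 \<in> Wb \<alpha> m (Suc m)"
proof -
  obtain \<sigma> :: "'a list \<Rightarrow> 'a set" where card: "\<forall>w. card (\<sigma> w) = \<alpha> (length w) + 1"
    and win: "\<forall>a. (\<forall>j. a j \<in> \<sigma> (map a [0..<j])) \<longrightarrow> a \<in> Xs"
    using assms unfolding alice_wins_def by blast
  have ne: "\<sigma> w \<noteq> {}" for w using card[rule_format, of w] by auto
  have claim: "length w + j = Suc m \<Longrightarrow> (\<forall>i<length w. w!i \<in> \<sigma> (take i w)) \<Longrightarrow> Sset w \<in> Wb \<alpha> m j"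
    for j w
  proof (induction j arbitrary: w)
    case 0
    define ch where "ch n v = (if n < length w then w!n else SOME a. a \<in> \<sigma> v)" for n v
    have pw: "n \<le> length w \<Longrightarrow> pre ch n = take n w" for n
      by (induction n) (auto simp: ch_def take_Suc_conv_app_nth)
    have "\<forall>j. play ch j \<in> \<sigma> (map (play ch) [0..<j])"
    proof
      fix j
      show "play ch j \<in> \<sigma> (map (play ch) [0..<j])"
      proof (cases "j < length w")
        case True
        then show ?thesis using 0 pw[of j] by (simp add: pre_map play_def ch_def)
      next
        case False
        then show ?thesis using someI_ex[of "\<lambda>a. a \<in> \<sigma> (pre ch j)"] ne
          by (auto simp: pre_map play_def ch_def)
      qed
    qed
    then have "play ch \<in> Xs" using win by blast
    then have "Sset (pre ch (length w)) \<noteq> {}" using Xs_Sset pre_map by metis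
    then have "Sset w \<noteq> {}" using pw by simp
    then show ?case using Sset_sub by (simp add: N0_def)
  next
    case (Suc j)
    have lw: "length w = m - j" "j \<le> m" using Suc.prems(1) by auto
    have sub: "\<sigma> w \<subseteq> {a. dl (Sset w) a \<in> Wb \<alpha> m j}"
    proof
      fix a assume a: "a \<in> \<sigma> w"
      have "\<forall>i<length (w@[a]). (w@[a])!i \<in> \<sigma> (take i (w@[a]))"
      proof (intro allI impI)
        fix i assume "i < length (w@[a])"
        then consider "i < length w" | "i = length w" by fastforce
        then show "(w@[a])!i \<in> \<sigma> (take i (w@[a]))"
          by cases (use Suc.prems(2) a in \<open>auto simp: nth_append\<close>)
      qed
      then have "Sset (w@[a]) \<in> Wb \<alpha> m j" using Suc.IH Suc.prems(1) by simp
      then show "a \<in> {a. dl (Sset w) a \<in> Wb \<alpha> m j}" by (simp add: Sset_snoc)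
    qed
    have "card (\<sigma> w) \<le> card {a. dl (Sset w) a \<in> Wb \<alpha> m j}"
      using sub by (intro card_mono) auto
    then have c: "\<alpha> (m - j) + 1 \<le> card {a. dl (Sset w) a \<in> Wb \<alpha> m j}" using card lw by simp
    obtain a where "a \<in> \<sigma> w" using ne by blast
    then have "dl (Sset w) a \<in> Wb \<alpha> m j" using sub by blast
    then have "Sset w \<noteq> {}" using Wb_ne dl_empty by force
    then show ?case using c Sset_sub by (simp add: Fw_def)
  qed
  show ?thesis using claim[of "[]" "Suc m"] Sset_Nil by simp
qed

lemma Wb_win:
  assumes rec: "\<forall>p. W p \<subseteq> Fw (\<alpha> p) (W (Suc p))" and s0: "S0 \<in> W 0"
  shows "alice_wins Xs \<alpha>"
proof -
  have ne: "W p \<noteq> {}" for p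
  proof (induction p)
    case 0 then show ?case using s0 by blast
  next
    case (Suc p)
    then obtain S where "S \<in> Fw (\<alpha> p) (W (Suc p))" using rec by blast
    then have "{a. dl S a \<in> W (Suc p)} \<noteq> {}" unfolding Fw_def by fastforce
    then show ?case by blast
  qed
  have bound: "\<alpha> p + 1 \<le> card (UNIV :: 'a set)" for p
  proof -
    obtain S where "S \<in> Fw (\<alpha> p) (W (Suc p))" using rec ne by blast
    then have "\<alpha> p + 1 \<le> card {a. dl S a \<in> W (Suc p)}" unfolding Fw_def by blast
    also have "\<dots> \<le> card (UNIV :: 'a set)" by (intro card_mono) auto
    finally show ?thesis .
  qed
  have exC: "\<exists>C :: 'a set. card C = \<alpha> p + 1" for p
    using obtain_subset_with_card_n[OF bound[of p]] by metis
  define good where "good w = {a. dl (Sset w) a \<in> W (Suc (length w))}" for w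
  define \<sigma> where "\<sigma> w = (if \<exists>C. C \<subseteq> good w \<and> card C = \<alpha> (length w) + 1
     then SOME C. C \<subseteq> good w \<and> card C = \<alpha> (length w) + 1
     else SOME C. card C = \<alpha> (length w) + 1)" for w
  have card: "\<forall>w. card (\<sigma> w) = \<alpha> (length w) + 1"
  proof
    fix w show "card (\<sigma> w) = \<alpha> (length w) + 1"
    proof (cases "\<exists>C. C \<subseteq> good w \<and> card C = \<alpha> (length w) + 1")
      case True
      have e: "\<sigma> w = (SOME C. C \<subseteq> good w \<and> card C = \<alpha> (length w) + 1)"
        unfolding \<sigma>_def by (rule if_P[OF True])
      show ?thesis using someI_ex[OF True] unfolding e by blast
    next
      case False
      have e: "\<sigma> w = (SOME C. card C = \<alpha> (length w) + 1)"
        unfolding \<sigma>_def by (rule if_not_P[OF False])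
      show ?thesis using someI_ex[OF exC[of "length w"]] unfolding e by blast
    qed
  qed
  have win: "a \<in> Xs" if a: "\<forall>j. a j \<in> \<sigma> (map a [0..<j])" for a
  proof -
    have inW: "Sset (map a [0..<n]) \<in> W n" for n
    proof (induction n)
      case 0 then show ?case using s0 Sset_Nil by simp
    next
      case (Suc n)
      define w where "w = map a [0..<n]"
      have lw: "length w = n" by (simp add: w_def)
      have "Sset w \<in> Fw (\<alpha> n) (W (Suc n))" using Suc rec w_def by blast
      then have "\<alpha> n + 1 \<le> card (good w)" unfolding Fw_def good_def lw by simp
      then obtain C where C: "C \<subseteq> good w" "card C = \<alpha> n + 1"
        using obtain_subset_with_card_n by metis
      then have ex: "\<exists>C. C \<subseteq> good w \<and> card C = \<alpha> (length w) + 1" using lw by blast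
      have e: "\<sigma> w = (SOME C. C \<subseteq> good w \<and> card C = \<alpha> (length w) + 1)"
        unfolding \<sigma>_def by (rule if_P[OF ex])
      have "\<sigma> w \<subseteq> good w" using someI_ex[OF ex] unfolding e by blast
      moreover have "a n \<in> \<sigma> w" using a w_def by blast
      ultimately have "dl (Sset w) (a n) \<in> W (Suc n)" unfolding good_def lw by blast
      then show ?case by (simp add: w_def Sset_snoc)
    qed
    have "Sset (map a [0..<n]) \<noteq> {}" for n
      using inW[of n] rec Fw_ne by blast
    then show ?thesis using konig by blast
  qed
  show ?thesis unfolding alice_wins_def using card win by blast
qed

lemma Wb_rec:
  assumes "\<forall>p>m. \<alpha> p = 0"
  shows "Wb \<alpha> m (Suc m - p) = Fw (\<alpha> p) (Wb \<alpha> m (Suc m - Suc p))"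
proof (cases "p \<le> m")
  case True
  then have "Suc m - p = Suc (m - p)" "m - (m - p) = p" "Suc m - Suc p = m - p" by auto
  then show ?thesis by simp
next
  case False
  then show ?thesis using assms F0N by simp
qed

lemma win_iff:
  assumes "\<forall>p>m. \<alpha> p = 0"
  shows "alice_wins Xs \<alpha> \<longleftrightarrow> S0 \<in> Wb \<alpha> m (Suc m)"
proof
  assume "S0 \<in> Wb \<alpha> m (Suc m)"
  then show "alice_wins Xs \<alpha>"
    using Wb_win[of "\<lambda>p. Wb \<alpha> m (Suc m - p)" \<alpha>] Wb_rec[OF assms] by simp
qed (rule win_Wb)

end



lemma chain_snoc:
  assumes "w \<noteq> []"
  shows "(\<forall>i. Suc i < length (w@[r]) \<longrightarrow> P ((w@[r])!i) ((w@[r])!Suc i)) \<longleftrightarrow>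
         (\<forall>i. Suc i < length w \<longrightarrow> P (w!i) (w!Suc i)) \<and> P (last w) r"
proof
  assume h: "\<forall>i. Suc i < length (w@[r]) \<longrightarrow> P ((w@[r])!i) ((w@[r])!Suc i)"
  have "\<forall>i. Suc i < length w \<longrightarrow> P (w!i) (w!Suc i)"
  proof (intro allI impI)
    fix i assume "Suc i < length w"
    then show "P (w!i) (w!Suc i)" using h[rule_format, of i] by (simp add: nth_append)
  qed
  moreover have "P (last w) r"
  proof -
    have "Suc (length w - 1) < length (w@[r])" using assms by simp
    then have "P ((w@[r])!(length w - 1)) ((w@[r])!Suc (length w - 1))" using h by blast
    moreover have "(w@[r])!(length w - 1) = last w" using assms
      by (simp add: nth_append last_conv_nth)
    moreover have "Suc (length w - 1) = length w" using assms by simp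
    ultimately show ?thesis by simp
  qed
  ultimately show "(\<forall>i. Suc i < length w \<longrightarrow> P (w!i) (w!Suc i)) \<and> P (last w) r" by blast
next
  assume h: "(\<forall>i. Suc i < length w \<longrightarrow> P (w!i) (w!Suc i)) \<and> P (last w) r"
  show "\<forall>i. Suc i < length (w@[r]) \<longrightarrow> P ((w@[r])!i) ((w@[r])!Suc i)"
  proof (intro allI impI)
    fix i assume i: "Suc i < length (w@[r])"
    show "P ((w@[r])!i) ((w@[r])!Suc i)"
    proof (cases "Suc i < length w")
      case True then show ?thesis using h by (simp add: nth_append)
    next
      case False
      then have "Suc i = length w" using i by simp
      then have i': "i = length w - 1" by simp
      have e1: "(w@[r])!i = last w" using i' assms by (simp add: nth_append last_conv_nth)
      have e2: "(w@[r])!Suc i = r" using \<open>Suc i = length w\<close> by simp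
      show ?thesis unfolding e1 e2 using h by simp
    qed
  qed
qed

lemma foldr_max_le: "(\<forall>x\<in>set t. x \<le> m) \<Longrightarrow> foldr max t (0::nat) \<le> m"
  by (induction t) auto

lemma foldr_max_ge: "x \<in> set t \<Longrightarrow> x \<le> foldr max t (0::nat)"
  by (induction t) auto

lemma foldr_max_in: "foldr max t (0::nat) = 0 \<or> foldr max t 0 \<in> set t"
  by (induction t) (auto simp: max_def)

lemma count_filter: "count_list t p + length (filter (\<lambda>n. Suc p \<le> n) t) = length (filter (\<lambda>n. p \<le> (n::nat)) t)"
  by (induction t) auto

lemma upclosed_interval:
  assumes "S \<subseteq> {..<(m::nat)}" "\<And>i j. i \<in> S \<Longrightarrow> i \<le> j \<Longrightarrow> j < m \<Longrightarrow> j \<in> S"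
  shows "S = {m - card S..<m}"
proof (cases "S = {}")
  case True then show ?thesis by simp
next
  case False
  have fin: "finite S" using assms(1) finite_subset by blast
  define a where "a = Min S"
  have a: "a \<in> S" "\<And>x. x \<in> S \<Longrightarrow> a \<le> x" using fin False by (auto simp: a_def)
  have "S = {a..<m}"
  proof
    show "S \<subseteq> {a..<m}" using a(2) assms(1) by auto
    show "{a..<m} \<subseteq> S"
    proof
      fix x assume "x \<in> {a..<m}"
      then show "x \<in> S" using assms(2)[OF a(1)] by simp
    qed
  qed
  moreover have "a < m" using a(1) assms(1) by auto
  ultimately show ?thesis by simp
qed

context sg begin

definition cnt :: "bool list \<Rightarrow> nat" where "cnt r = length (filter id r)"

definition rowle :: "nat \<Rightarrow> bool list \<Rightarrow> bool list \<Rightarrow> bool" where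
  "rowle d x y \<longleftrightarrow> (\<forall>c<d. x!c \<longrightarrow> y!c)"

fun rowok :: "nat \<Rightarrow> bool list option \<Rightarrow> bool list \<Rightarrow> bool" where
  "rowok d None r = (length r = d \<and> sorted r \<and> True \<in> set r)"
| "rowok d (Some r') r = (length r = d \<and> sorted r \<and> rowle d r' r)"

fun stp :: "nat \<Rightarrow> (bool list option \<times> nat \<times> nat set set) option \<Rightarrow> bool list
    \<Rightarrow> (bool list option \<times> nat \<times> nat set set) option" where
  "stp d None r = None"
| "stp d (Some (pr, k, W)) r =
     (if rowok d pr r then Some (Some r, cnt r, Fw (cnt r - k) W) else None)"

fun acc :: "nat \<Rightarrow> (bool list option \<times> nat \<times> nat set set) option \<Rightarrow> bool" where
  "acc d None = False"
| "acc d (Some (pr, k, W)) = (S0 \<in> Fw (d - k) W)"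

definition stkw :: "nat \<times> nat set set \<Rightarrow> bool list \<Rightarrow> nat \<times> nat set set" where
  "stkw kW r = (cnt r, Fw (cnt r - fst kW) (snd kW))"

definition valid :: "nat \<Rightarrow> bool list list \<Rightarrow> bool" where
  "valid d w \<longleftrightarrow> (\<forall>r\<in>set w. length r = d \<and> sorted r) \<and>
     (\<forall>i. Suc i < length w \<longrightarrow> rowle d (w!i) (w!Suc i)) \<and>
     (w \<noteq> [] \<longrightarrow> True \<in> set (hd w))"

lemma valid_snoc:
  "valid d (w@[r]) \<longleftrightarrow> valid d w \<and> rowok d (if w = [] then None else Some (last w)) r"
proof (cases "w = []")
  case True then show ?thesis by (simp add: valid_def)
next
  case False
  show ?thesis unfolding valid_def chain_snoc[OF False] using False by auto
qed

lemma fold_valid: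
  "foldl (stp d) (Some (None, 0, N0)) w =
    (if valid d w then Some (if w = [] then None else Some (last w), foldl stkw (0, N0) w) else None)"
proof (induction w rule: rev_induct)
  case Nil then show ?case by (simp add: valid_def)
next
  case (snoc r w)
  obtain k W where kw: "foldl stkw (0, N0) w = (k, W)" by fastforce
  show ?case
  proof (cases "valid d w")
    case False
    then show ?thesis using snoc valid_snoc by simp
  next
    case True
    have st: "foldl stkw (0, N0) (w@[r]) = (cnt r, Fw (cnt r - k) W)"
      by (simp add: kw) (simp add: stkw_def)
    show ?thesis using True snoc valid_snoc[of d w r] kw st by (cases "w = []") simp_all
  qed
qed

lemma regular_acc: "regular_lang {w. acc d (foldl (stp d) (Some (None, 0, N0)) w)}"
proof (rule regular_fold)
  define Q :: "(bool list option \<times> nat \<times> nat set set) option set" where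
    "Q = insert None (Some ` ((insert None (Some ` {r. length r = d})) \<times> {..d} \<times> Pow (Pow S0)))"
  have fl: "finite {r :: bool list. length r = d}"
    using finite_lists_length_eq[of "UNIV :: bool set" d] by simp
  show "finite Q" unfolding Q_def using fl finite_S0 by simp
  show "Some (None, 0, N0) \<in> Q" unfolding Q_def N0_def by auto
  show "stp d q b \<in> Q" if "q \<in> Q" for q b
  proof (cases q)
    case None then show ?thesis by (simp add: Q_def)
  next
    case (Some s)
    obtain pr k W where s: "s = (pr, k, W)" by (cases s) auto
    have "cnt b \<le> length b" unfolding cnt_def by (rule length_filter_le)
    then show ?thesis using Some s Fw_sub by (cases pr) (auto simp: Q_def)
  qed
qed

lemma decode:
  assumes "valid d w"
  shows "\<exists>t. sorted t \<and> length t = d \<and> w = rep_tuple t"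
proof -
  define m where "m = length w"
  define col where "col c = {i. i < m \<and> w!i!c}" for c
  define t where "t = map (\<lambda>c. card (col c)) [0..<d]"
  have rows: "length (w!i) = d" "sorted (w!i)" if "i < m" for i
    using assms that unfolding valid_def m_def by auto
  have chain: "w!i!c \<Longrightarrow> w!Suc i!c" if "Suc i < m" "c < d" for i c
    using assms that unfolding valid_def m_def rowle_def by auto
  have up0: "\<forall>j. i \<le> j \<longrightarrow> j < m \<longrightarrow> w!j!c" if "w!i!c" "c < d" for i c
  proof
    fix j show "i \<le> j \<longrightarrow> j < m \<longrightarrow> w!j!c"
    proof (induction j)
      case 0 then show ?case using that by auto
    next
      case (Suc j)
      show ?case
      proof (cases "i = Suc j")
        case True then show ?thesis using that by simp
      next
        case False then show ?thesis using Suc chain[of j c] that(2) by simp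
      qed
    qed
  qed
  have up: "w!j!c" if "w!i!c" "i \<le> j" "j < m" "c < d" for i j c
    using up0[OF that(1,4)] that(2,3) by blast
  have colI: "col c = {m - card (col c)..<m}" if "c < d" for c
    by (rule upclosed_interval) (auto simp: col_def intro: up[OF _ _ _ that])
  have tc: "t!c = card (col c)" if "c < d" for c using that by (simp add: t_def)
  have tle: "\<forall>x\<in>set t. x \<le> m"
  proof
    fix x assume "x \<in> set t"
    then obtain c where "c < d" "x = card (col c)" by (auto simp: t_def)
    moreover have "col c \<subseteq> {..<m}" by (auto simp: col_def)
    ultimately show "x \<le> m" by (metis card_lessThan card_mono finite_lessThan)
  qed
  have mt: "foldr max t 0 = m"
  proof (cases "m = 0")
    case True then show ?thesis using foldr_max_le[OF tle] by simp
  next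
    case False
    then have "True \<in> set (w!0)" using assms unfolding valid_def m_def by (simp add: hd_conv_nth)
    then obtain c where c: "c < d" "w!0!c" using rows[of 0] False by (auto simp: in_set_conv_nth)
    have "col c = {..<m}" using up[OF c(2) _ _ c(1)] by (auto simp: col_def)
    then have tcm: "t!c = m" using tc[OF c(1)] by simp
    have "c < length t" using c(1) by (simp add: t_def)
    then have "t!c \<in> set t" by (rule nth_mem)
    then have "m \<in> set t" using tcm by simp
    then show ?thesis using foldr_max_le[OF tle] foldr_max_ge by (simp add: antisym)
  qed
  have "sorted t"
  proof (rule sorted_iff_nth_mono[THEN iffD2], intro allI impI)
    fix c c' assume cc: "c \<le> c'" "c' < length t"
    then have d: "c < d" "c' < d" by (auto simp: t_def)
    have "col c \<subseteq> col c'"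
    proof
      fix i assume "i \<in> col c"
      then have i: "i < m" "w!i!c" by (auto simp: col_def)
      have "w!i!c \<le> w!i!c'" using sorted_nth_mono[OF rows(2)[OF i(1)] cc(1)] rows(1)[OF i(1)] d by simp
      then show "i \<in> col c'" using i by (simp add: col_def)
    qed
    then have "card (col c) \<le> card (col c')" by (intro card_mono) (auto simp: col_def)
    then show "t!c \<le> t!c'" using d tc by simp
  qed
  moreover have "length t = d" by (simp add: t_def)
  moreover have "w = rep_tuple t"
  proof (rule nth_equalityI)
    show "length w = length (rep_tuple t)" by (simp add: rep_tuple_def Let_def mt m_def)
    fix i assume i: "i < length w"
    have ri: "rep_tuple t ! i = map (\<lambda>n. m - n \<le> i) t" using i by (simp add: rep_tuple_def Let_def mt m_def)
    show "w!i = rep_tuple t ! i" unfolding ri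
    proof (rule nth_equalityI)
      show "length (w!i) = length (map (\<lambda>n. m - n \<le> i) t)" using rows(1) i by (simp add: t_def m_def)
      fix c assume "c < length (w!i)"
      then have c: "c < d" using rows(1) i m_def by simp
      have "w!i!c \<longleftrightarrow> i \<in> col c" using i by (simp add: col_def m_def)
      also have "\<dots> \<longleftrightarrow> m - t!c \<le> i" using colI[OF c] tc[OF c] i m_def by auto
      finally show "w!i!c = map (\<lambda>n. m - n \<le> i) t ! c" using c by (simp add: t_def)
    qed
  qed
  ultimately show ?thesis by blast
qed

lemma encode:
  assumes "sorted t" "length t = d"
  shows "valid d (rep_tuple t)"
proof -
  define m where "m = foldr max t 0"
  have r: "rep_tuple t = map (\<lambda>i. map (\<lambda>n. m - n \<le> i) t) [0..<m]"
    by (simp add: rep_tuple_def Let_def m_def)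
  have srt: "sorted (map (\<lambda>n. m - n \<le> i) t)" for i
  proof (rule sorted_iff_nth_mono[THEN iffD2], intro allI impI)
    fix c c' assume "c \<le> c'" "c' < length (map (\<lambda>n. m - n \<le> i) t)"
    then have "t!c \<le> t!c'" using sorted_nth_mono[OF assms(1)] by simp
    then show "map (\<lambda>n. m - n \<le> i) t ! c \<le> map (\<lambda>n. m - n \<le> i) t ! c'"
      using \<open>c \<le> c'\<close> \<open>c' < _\<close> by auto
  qed
  have hd: "True \<in> set (map (\<lambda>n. m - n \<le> 0) t)" if "0 < m"
  proof -
    have "m \<in> set t" using foldr_max_in[of t] that m_def by auto
    then show ?thesis by force
  qed
  show ?thesis unfolding valid_def r
    using assms(2) srt hd by (auto simp: hd_map rowle_def)
qed

lemma acc_rep: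
  assumes "sorted t" "length t = d"
  shows "acc d (foldl (stp d) (Some (None, 0, N0)) (rep_tuple t)) \<longleftrightarrow>
         S0 \<in> Wb (count_list t) (foldr max t 0) (Suc (foldr max t 0))"
proof -
  define m where "m = foldr max t 0"
  define w where "w = rep_tuple t"
  define \<alpha> where "\<alpha> = count_list t"
  have tle: "\<forall>x\<in>set t. x \<le> m" using foldr_max_ge m_def by blast
  have lw: "length w = m" by (simp add: w_def rep_tuple_def Let_def m_def)
  have wi: "w!i = map (\<lambda>n. m - n \<le> i) t" if "i < m" for i
    using that by (simp add: w_def rep_tuple_def Let_def m_def)
  have cnt_i: "cnt (w!i) = length (filter (\<lambda>n. m - i \<le> n) t)" if "i < m" for i
  proof -
    have "cnt (w!i) = length (filter (\<lambda>n. m - n \<le> i) t)"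
      using wi[OF that] by (simp add: cnt_def filter_map comp_def)
    also have "(\<lambda>n. m - n \<le> i) = (\<lambda>n. m - i \<le> n)" by (auto simp: fun_eq_iff)
    finally show ?thesis .
  qed
  have cf: "\<alpha> p = length (filter (\<lambda>n. p \<le> n) t) - length (filter (\<lambda>n. Suc p \<le> n) t)" for p
    using count_filter[of t p] by (simp add: \<alpha>_def)
  have inv: "foldl stkw (0, N0) (take i w) = (length (filter (\<lambda>n. Suc m - i \<le> n) t), Wb \<alpha> m i)"
    if "i \<le> m" for i
    using that
  proof (induction i)
    case 0
    have "filter (\<lambda>n. Suc m \<le> n) t = []" using tle by (auto simp: filter_empty_conv)
    then show ?case by simp
  next
    case (Suc i)
    then have i: "i < m" by simp
    have tk: "take (Suc i) w = take i w @ [w!i]" using i lw by (simp add: take_Suc_conv_app_nth)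
    have "Suc m - i = Suc (m - i)" "Suc m - Suc i = m - i" using i by auto
    then show ?case using Suc i tk cnt_i[OF i] cf[of "m - i"] by (simp add: stkw_def)
  qed
  have v: "valid d w" using encode[OF assms] w_def by simp
  have "foldl stkw (0, N0) w = (length (filter (\<lambda>n. 1 \<le> n) t), Wb \<alpha> m m)"
    using inv[of m] lw by simp
  moreover have a0: "\<alpha> 0 = d - length (filter (\<lambda>n. 1 \<le> n) t)" using cf[of 0] assms(2) by simp
  ultimately have fv: "foldl (stp d) (Some (None, 0, N0)) w =
     Some (if w = [] then None else Some (last w), length (filter (\<lambda>n. 1 \<le> n) t), Wb \<alpha> m m)"
    using v fold_valid[of d w] by simp
  have a1: "acc d (foldl (stp d) (Some (None, 0, N0)) w) \<longleftrightarrow> S0 \<in> Fw (\<alpha> 0) (Wb \<alpha> m m)"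
    unfolding fv using a0 by simp
  have a2: "Wb \<alpha> m (Suc m) = Fw (\<alpha> 0) (Wb \<alpha> m m)" by simp
  show ?thesis unfolding w_def[symmetric] m_def[symmetric] \<alpha>_def[symmetric] a1 a2 ..
qed

lemma lang_eq:
  "rep_tuple ` {t. sorted t \<and> length t = d \<and> alice_wins Xs (count_list t)} =
   {w. acc d (foldl (stp d) (Some (None, 0, N0)) w)}"
proof (intro set_eqI iffI)
  fix w assume "w \<in> rep_tuple ` {t. sorted t \<and> length t = d \<and> alice_wins Xs (count_list t)}"
  then obtain t where t: "w = rep_tuple t" "sorted t" "length t = d" "alice_wins Xs (count_list t)"
    by blast
  have "\<forall>p>foldr max t 0. count_list t p = 0" by (meson count_notin foldr_max_ge leD)
  then have wi: "alice_wins Xs (count_list t) \<longleftrightarrow>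
      S0 \<in> Wb (count_list t) (foldr max t 0) (Suc (foldr max t 0))" by (rule win_iff)
  have "acc d (foldl (stp d) (Some (None, 0, N0)) (rep_tuple t))"
    using acc_rep[OF t(2,3)] wi t(4) by blast
  then show "w \<in> {w. acc d (foldl (stp d) (Some (None, 0, N0)) w)}" using t(1) by simp
next
  fix w assume w: "w \<in> {w. acc d (foldl (stp d) (Some (None, 0, N0)) w)}"
  then have "valid d w" using fold_valid[of d w] by (auto split: if_splits)
  then obtain t where t: "sorted t" "length t = d" "w = rep_tuple t" using decode by blast
  have "\<forall>p>foldr max t 0. count_list t p = 0" by (meson count_notin foldr_max_ge leD)
  then have wi: "alice_wins Xs (count_list t) \<longleftrightarrow>
      S0 \<in> Wb (count_list t) (foldr max t 0) (Suc (foldr max t 0))" by (rule win_iff)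
  have "acc d (foldl (stp d) (Some (None, 0, N0)) (rep_tuple t))" using w t(3) by simp
  then have "alice_wins Xs (count_list t)" using acc_rep[OF t(1,2)] wi by blast
  then show "w \<in> rep_tuple ` {t. sorted t \<and> length t = d \<and> alice_wins Xs (count_list t)}"
    using t by blast
qed

end



lemma length_pre: "length (pre ch n) = n" by (induction n) auto

context sg begin

lemma win_bound:
  assumes "alice_wins Xs \<alpha>" shows "\<alpha> p < card (UNIV :: 'a set)"
proof -
  obtain \<sigma> :: "'a list \<Rightarrow> 'a set" where card: "\<forall>w. card (\<sigma> w) = \<alpha> (length w) + 1"
    using assms unfolding alice_wins_def by blast
  have "card (\<sigma> (replicate p undefined)) \<le> card (UNIV :: 'a set)" by (intro card_mono) auto
  then show ?thesis using card[rule_format, of "replicate p undefined"] by simp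
qed

lemma win_mono:
  assumes "alice_wins Xs \<alpha>" "\<forall>p. \<beta> p \<le> \<alpha> p" shows "alice_wins Xs \<beta>"
proof -
  obtain \<sigma> :: "'a list \<Rightarrow> 'a set" where card: "\<forall>w. card (\<sigma> w) = \<alpha> (length w) + 1"
    and win: "\<forall>a. (\<forall>j. a j \<in> \<sigma> (map a [0..<j])) \<longrightarrow> a \<in> Xs"
    using assms unfolding alice_wins_def by blast
  have ex: "\<exists>C. C \<subseteq> \<sigma> w \<and> card C = \<beta> (length w) + 1" for w
    using obtain_subset_with_card_n[of "\<beta> (length w) + 1" "\<sigma> w"] card assms(2) by force
  define \<sigma>' where "\<sigma>' w = (SOME C. C \<subseteq> \<sigma> w \<and> card C = \<beta> (length w) + 1)" for w
  have s': "\<sigma>' w \<subseteq> \<sigma> w \<and> card (\<sigma>' w) = \<beta> (length w) + 1" for w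
    unfolding \<sigma>'_def using someI_ex[OF ex[of w]] .
  show ?thesis unfolding alice_wins_def
    using s' win by (intro exI[of _ \<sigma>']) blast
qed

lemma win_uncountable:
  assumes "alice_wins Xs \<beta>" "infinite {j. \<beta> j \<noteq> 0}"
  shows "\<not> countable Xs"
proof
  assume cX: "countable Xs"
  obtain \<sigma> :: "'a list \<Rightarrow> 'a set" where card: "\<forall>w. card (\<sigma> w) = \<beta> (length w) + 1"
    and win: "\<forall>a. (\<forall>j. a j \<in> \<sigma> (map a [0..<j])) \<longrightarrow> a \<in> Xs"
    using assms unfolding alice_wins_def by blast
  define P where "P = {j. \<beta> j \<noteq> 0}"
  define e0 where "e0 C = (SOME a. a \<in> C)" for C :: "'a set"
  define e1 where "e1 C = (SOME a. a \<in> C \<and> a \<noteq> e0 C)" for C :: "'a set"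
  have ne: "\<sigma> w \<noteq> {}" for w using card[rule_format, of w] by auto
  have e0m: "e0 (\<sigma> w) \<in> \<sigma> w" for w unfolding e0_def using ne[of w] by (simp add: some_in_eq)
  have e1m: "e1 (\<sigma> w) \<in> \<sigma> w \<and> e1 (\<sigma> w) \<noteq> e0 (\<sigma> w)" if "length w \<in> P" for w
  proof -
    have "card (\<sigma> w) \<ge> 2" using card that by (simp add: P_def)
    have "\<forall>x. \<sigma> w \<noteq> {x}"
    proof (intro allI notI)
      fix x assume "\<sigma> w = {x}"
      then have "card (\<sigma> w) = 1" by simp
      then show False using \<open>card (\<sigma> w) \<ge> 2\<close> by simp
    qed
    then have "\<sigma> w \<noteq> {e0 (\<sigma> w)}" by blast
    then have "\<exists>a. a \<in> \<sigma> w \<and> a \<noteq> e0 (\<sigma> w)" using e0m[of w] by blast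
    then show ?thesis unfolding e1_def by (rule someI_ex)
  qed
  define ch where "ch B n v = (if n \<in> B then e1 (\<sigma> v) else e0 (\<sigma> v))" for B :: "nat set" and n v
  define f where "f B = play (ch B)" for B
  have inX: "f B \<in> Xs" if "B \<subseteq> P" for B
  proof -
    have "\<forall>j. f B j \<in> \<sigma> (map (f B) [0..<j])"
    proof
      fix j
      have "f B j = ch B j (pre (ch B) j)" by (simp add: f_def play_def)
      moreover have "map (f B) [0..<j] = pre (ch B) j" by (simp add: f_def pre_map)
      ultimately show "f B j \<in> \<sigma> (map (f B) [0..<j])"
        using e0m e1m[of "pre (ch B) j"] that length_pre[of "ch B" j] by (auto simp: ch_def)
    qed
    then show ?thesis using win by blast
  qed
  have inj: "inj_on f (Pow P)"
  proof
    fix B B' assume B: "B \<in> Pow P" "B' \<in> Pow P" "f B = f B'"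
    show "B = B'"
    proof (rule ccontr)
      assume "B \<noteq> B'"
      then have exj: "\<exists>j. (j \<in> B) \<noteq> (j \<in> B')" by blast
      define j where "j = (LEAST j. (j \<in> B) \<noteq> (j \<in> B'))"
      have j: "(j \<in> B) \<noteq> (j \<in> B')" unfolding j_def by (rule LeastI_ex[OF exj])
      have lt: "n < j \<Longrightarrow> (n \<in> B) = (n \<in> B')" for n unfolding j_def using not_less_Least by blast
      have pe: "n \<le> j \<Longrightarrow> pre (ch B) n = pre (ch B') n" for n
        by (induction n) (auto simp: ch_def lt)
      define v where "v = pre (ch B) j"
      have v': "pre (ch B') j = v" using pe v_def by simp
      have "j \<in> P" using j B by auto
      have lv: "length v = j" unfolding v_def by (rule length_pre)
      have d: "e1 (\<sigma> v) \<noteq> e0 (\<sigma> v)" using e1m[of v] lv \<open>j \<in> P\<close> by simp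
      have "f B j = ch B j v" "f B' j = ch B' j v" using v' by (simp_all add: f_def play_def v_def)
      then have "f B j \<noteq> f B' j" using j d by (auto simp: ch_def)
      then show False using B(3) by simp
    qed
  qed
  have "f ` Pow P \<subseteq> Xs" using inX by blast
  then have "countable (f ` Pow P)" using cX countable_subset by blast
  then have "countable (Pow P)" using countable_image_inj_on inj by blast
  then show False using pow_infinite_uncountable assms(2) P_def by blast
qed

lemma countable_dim:
  assumes cX: "countable Xs"
  shows "\<exists>D. \<forall>\<alpha>. alice_wins Xs \<alpha> \<longrightarrow> seq_sum_le \<alpha> D"
proof (rule ccontr)
  assume neg: "\<not> (\<exists>D. \<forall>\<alpha>. alice_wins Xs \<alpha> \<longrightarrow> seq_sum_le \<alpha> D)"
  define A where "A = card (UNIV :: 'a set)"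
  define K where "K = card (Pow (Pow S0))"
  obtain \<alpha> where aw: "alice_wins Xs \<alpha>" and ns: "\<not> seq_sum_le \<alpha> (A * K)"
    using neg by blast
  obtain N where sN: "(\<Sum>j<N. \<alpha> j) > A * K" using ns unfolding seq_sum_le_def by (auto simp: not_le)
  define \<alpha>' where "\<alpha>' j = (if j < N then \<alpha> j else 0)" for j
  have aw': "alice_wins Xs \<alpha>'" using win_mono[OF aw] by (simp add: \<alpha>'_def)
  define nz where "nz = {p. p < N \<and> \<alpha> p \<noteq> 0}"
  have finnz: "finite nz" by (simp add: nz_def)
  have "(\<Sum>j<N. \<alpha> j) = (\<Sum>j\<in>nz. \<alpha> j)"
    by (rule sum.mono_neutral_right) (auto simp: nz_def)
  also have "\<dots> \<le> (\<Sum>j\<in>nz. A)" using win_bound[OF aw] by (intro sum_mono) (simp add: A_def less_imp_le)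
  also have "\<dots> = card nz * A" by simp
  finally have le: "(\<Sum>j<N. \<alpha> j) \<le> card nz * A" .
  have "A * K < card nz * A" using le sN by linarith
  then have cnz: "K < card nz" by (metis mult.commute mult_less_cancel1)
  define W where "W p = Wb \<alpha>' N (Suc N - p)" for p
  have supp: "\<forall>p>N. \<alpha>' p = 0" by (simp add: \<alpha>'_def)
  have Wrec: "W p = Fw (\<alpha>' p) (W (Suc p))" for p unfolding W_def by (rule Wb_rec[OF supp])
  have s0: "S0 \<in> W 0" using win_Wb[OF aw'] by (simp add: W_def)
  have "\<not> inj_on W nz"
  proof
    assume "inj_on W nz"
    moreover have "W ` nz \<subseteq> Pow (Pow S0)"
    proof (rule image_subsetI)
      fix p show "W p \<in> Pow (Pow S0)" unfolding W_def by (rule PowI) (rule Wb_sub)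
    qed
    ultimately have "card nz \<le> card (Pow (Pow S0))"
      using card_inj_on_le finite_S0 by (metis finite_Pow_iff)
    then show False using cnz K_def by simp
  qed
  then obtain p q where pq0: "p \<in> nz" "q \<in> nz" "p \<noteq> q" "W p = W q" unfolding inj_on_def by blast
  obtain p q where pq: "p \<in> nz" "q \<in> nz" "p < q" "W p = W q"
  proof (cases "p < q")
    case True then show ?thesis using that pq0 by blast
  next
    case False then show ?thesis using that[of q p] pq0 by auto
  qed
  define idx where "idx j = (if j < q then j else p + (j - p) mod (q - p))" for j
  define \<beta> where "\<beta> j = \<alpha>' (idx j)" for j
  define W' where "W' j = W (idx j)" for j
  have step: "W (Suc (idx j)) = W (idx (Suc j))" for j
  proof (cases "Suc j < q")
    case True then show ?thesis by (simp add: idx_def)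
  next
    case False
    show ?thesis
    proof (cases "Suc j = q")
      case True
      then have "idx j = j" "idx (Suc j) = p" using pq(3) by (auto simp: idx_def)
      then show ?thesis using True pq(4) by simp
    next
      case False
      then have jq: "q \<le> j" using \<open>\<not> Suc j < q\<close> by simp
      define r where "r = (j - p) mod (q - p)"
      have r: "r < q - p" using pq(3) by (simp add: r_def)
      have ij: "idx j = p + r" using jq by (simp add: idx_def r_def)
      have "Suc j - p = Suc (j - p)" using jq pq(3) by simp
      then have isj: "idx (Suc j) = p + (if Suc r = q - p then 0 else Suc r)"
        using jq by (simp add: idx_def r_def mod_Suc)
      show ?thesis
      proof (cases "Suc r = q - p")
        case True
        then have "Suc (idx j) = q" using ij pq(3) by simp
        then show ?thesis using isj True pq(4) by simp
      next
        case False then show ?thesis using isj ij by simp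
      qed
    qed
  qed
  have rec': "\<forall>j. W' j \<subseteq> Fw (\<beta> j) (W' (Suc j))"
  proof
    fix j
    have "W (idx j) = Fw (\<alpha>' (idx j)) (W (Suc (idx j)))" by (rule Wrec)
    then show "W' j \<subseteq> Fw (\<beta> j) (W' (Suc j))" unfolding W'_def \<beta>_def step by simp
  qed
  have "0 < q" using pq(3) by simp
  then have "S0 \<in> W' 0" using s0 by (simp add: W'_def idx_def)
  then have bw: "alice_wins Xs \<beta>" using Wb_win[OF rec'] by blast
  have "infinite {j. \<beta> j \<noteq> 0}"
    unfolding infinite_nat_iff_unbounded_le
  proof
    fix m
    define j where "j = q + m * (q - p)"
    have jp: "j - p = Suc m * (q - p)" using pq(3) by (simp add: j_def algebra_simps)
    have "\<not> j < q" by (simp add: j_def)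
    then have "idx j = p + (j - p) mod (q - p)" by (simp add: idx_def)
    then have "idx j = p" unfolding jp by simp
    moreover have "\<alpha>' p \<noteq> 0" using pq(1) by (simp add: nz_def \<alpha>'_def)
    moreover have "m \<le> j"
    proof -
      have "1 \<le> q - p" using pq(3) by simp
      then have "m * 1 \<le> m * (q - p)" by (rule mult_le_mono2)
      then have "m \<le> m * (q - p)" by (metis mult_1_right)
      then show ?thesis unfolding j_def by linarith
    qed
    ultimately show "\<exists>n\<ge>m. n \<in> {j. \<beta> j \<noteq> 0}" by (auto simp: \<beta>_def)
  qed
  then show False using win_uncountable[OF bw] cX by blast
qed

end

theorem mainTheorem15:
  fixes X :: "(nat \<Rightarrow> 'a::finite) set"
  assumes "sofic X"
  shows "weakly_1_codable (winning_shift X) \<and>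
         (countable X \<longrightarrow> one_codable (winning_shift X))"
proof -
  obtain E :: "(nat \<times> 'a \<times> nat) set" where E: "finite E"
    "X = {x. \<exists>p :: nat \<Rightarrow> nat. \<forall>i. (p i, x i, p (Suc i)) \<in> E}"
    using assms unfolding sofic_def by blast
  interpret sg E by unfold_locales (rule E(1))
  have XX: "X = Xs" using E(2) by (simp add: Xs_def)
  have ws: "winning_shift X = {\<alpha>. alice_wins Xs \<alpha>}"
    unfolding winning_shift_def XX using win_bound by blast
  have weak: "weakly_1_codable (winning_shift X)"
    unfolding weakly_1_codable_def
  proof (intro allI)
    fix k d
    show "one_recognizable d {t \<in> nu_set (winning_shift X) k. length t = d}"
      unfolding one_recognizable_def
    proof
      show "{t \<in> nu_set (winning_shift X) k. length t = d} \<subseteq> {t. length t = d}" by blast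
      show "regular_lang (rep_tuple ` {t \<in> nu_set (winning_shift X) k. length t = d})"
      proof (cases "d \<le> k")
        case True
        then have "{t \<in> nu_set (winning_shift X) k. length t = d} =
            {t. sorted t \<and> length t = d \<and> alice_wins Xs (count_list t)}"
          unfolding nu_set_char ws by auto
        then show ?thesis using lang_eq regular_acc by simp
      next
        case False
        then have e: "{t \<in> nu_set (winning_shift X) k. length t = d} = {}"
          unfolding nu_set_char by auto
        show ?thesis unfolding e image_empty by (rule regular_empty)
      qed
    qed
  qed
  moreover have "countable X \<longrightarrow> one_codable (winning_shift X)"
  proof
    assume "countable X"
    then obtain D where "\<forall>\<alpha>. alice_wins Xs \<alpha> \<longrightarrow> seq_sum_le \<alpha> D"
      using countable_dim XX by blast
    then have "has_finite_coding_dim (winning_shift X)"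
      unfolding has_finite_coding_dim_def ws by blast
    then show "one_codable (winning_shift X)" using weak by (simp add: one_codable_def)
  qed
  ultimately show ?thesis by blast
qed


end
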